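(* Let $A$ be a finite Abelian group of order $n$, and let $G=\mathrm{Cay}(A,S)$ be a Cayley graph on $A$ of degree $r=|S|$. (a) If $\gcd(n,r)=1$, then every group automorphism of $A$, viewed as a bijection $V(G)=A\to A$, is an $A$-distance antimagic labelling of $G$; in particular $G$ is $A$-distance antimagic. (b) If $\exp(A)$ divides $r$, then every group automorphism $f$ of $A$ is an $A$-distance magic labelling of $G$ with magic constant $\sum_{s\in S} f(s)$; in particular $G$ is $A$-distance magic.
   Context: For an Abelian group $A$ and $S\subseteq A\setminus\{0\}$ with $S=-S$, the Cayley graph $\mathrm{Cay}(A,S)$ has vertex set $A$, with $x,y$ adjacent iff $x-y\in S$. $\exp(A)$ is the least positive integer $m$ with $mx=0$ for all $x\in A$. For a graph $G$ with $n$ vertices and an Abelian group $A$ of order $n$ (written additively), and a bijection $f:V(G)\to A$, the weight of $x$ is $w_f(x)=\sum_{y\in N(x)} f(y)$ computed in $A$ ($N(x)$ the open neighbourhood). $f$ is an $A$-distance antimagic labelling if all weights are pairwise distinct, and an $A$-distance magic labelling if all weights are equal (the common value is the magic constant). $G$ is $A$-distance antimagic (resp. magic) if it admits such a labelling. *)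

theory Defs
  imports Main
begin

primrec nsmul :: "nat \<Rightarrow> 'a::ab_group_add \<Rightarrow> 'a" where
  "nsmul 0 x = 0"
| "nsmul (Suc m) x = x + nsmul m x"

definition group_exp :: "'a::{ab_group_add,finite} itself \<Rightarrow> nat" where
  "group_exp _ = (LEAST m. 0 < m \<and> (\<forall>x::'a. nsmul m x = 0))"

definition group_aut :: "('a::ab_group_add \<Rightarrow> 'a) \<Rightarrow> bool" where
  "group_aut f \<longleftrightarrow> bij f \<and> (\<forall>x y. f (x + y) = f x + f y)"

definition cayley_adj :: "'a::ab_group_add set \<Rightarrow> 'a \<Rightarrow> 'a \<Rightarrow> bool" where
  "cayley_adj S x y \<longleftrightarrow> x - y \<in> S"

definition nbhd :: "'v set \<Rightarrow> ('v \<Rightarrow> 'v \<Rightarrow> bool) \<Rightarrow> 'v \<Rightarrow> 'v set" where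
  "nbhd V adj x = {y \<in> V. adj x y}"

definition weight :: "'v set \<Rightarrow> ('v \<Rightarrow> 'v \<Rightarrow> bool) \<Rightarrow> ('v \<Rightarrow> 'a::comm_monoid_add) \<Rightarrow> 'v \<Rightarrow> 'a" where
  "weight V adj f x = (\<Sum>y\<in>nbhd V adj x. f y)"

definition dist_antimagic_labelling ::
  "'v set \<Rightarrow> ('v \<Rightarrow> 'v \<Rightarrow> bool) \<Rightarrow> ('v \<Rightarrow> 'a::{ab_group_add,finite}) \<Rightarrow> bool" where
  "dist_antimagic_labelling V adj f \<longleftrightarrow>
     bij_betw f V (UNIV :: 'a set) \<and> inj_on (weight V adj f) V"

definition dist_magic_labelling ::
  "'v set \<Rightarrow> ('v \<Rightarrow> 'v \<Rightarrow> bool) \<Rightarrow> ('v \<Rightarrow> 'a::{ab_group_add,finite}) \<Rightarrow> 'a \<Rightarrow> bool" where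
  "dist_magic_labelling V adj f c \<longleftrightarrow>
     bij_betw f V (UNIV :: 'a set) \<and> (\<forall>x\<in>V. weight V adj f x = c)"

definition is_dist_antimagic ::
  "'a::{ab_group_add,finite} itself \<Rightarrow> 'v set \<Rightarrow> ('v \<Rightarrow> 'v \<Rightarrow> bool) \<Rightarrow> bool" where
  "is_dist_antimagic _ V adj \<longleftrightarrow> (\<exists>f :: 'v \<Rightarrow> 'a. dist_antimagic_labelling V adj f)"

definition is_dist_magic ::
  "'a::{ab_group_add,finite} itself \<Rightarrow> 'v set \<Rightarrow> ('v \<Rightarrow> 'v \<Rightarrow> bool) \<Rightarrow> bool" where
  "is_dist_magic _ V adj \<longleftrightarrow> (\<exists>(f :: 'v \<Rightarrow> 'a) c. dist_magic_labelling V adj f c)"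

end

theory Submission
  imports Defs
begin

lemma nsmul_add: "nsmul (a+b) x = nsmul a x + nsmul b (x::'a::ab_group_add)"
  by (induction a) (auto simp: add.assoc)

lemma nsmul_mult: "nsmul (a*b) x = nsmul a (nsmul b (x::'a::ab_group_add))"
  by (induction a) (auto simp: nsmul_add)

lemma nsmul_zero: "nsmul a (0::'a::ab_group_add) = 0"
  by (induction a) auto

lemma nsmul_diff: "nsmul a (x - y) = nsmul a x - nsmul a (y::'a::ab_group_add)"
  by (induction a) (auto simp: algebra_simps)

lemma sum_const_nsmul: "finite A \<Longrightarrow> sum (\<lambda>_. c) A = nsmul (card A) (c::'a::ab_group_add)"
  by (induction A rule: finite_induct) auto

lemma sum_add_const: "finite A \<Longrightarrow> (\<Sum>x\<in>A. g x + c) = sum g A + nsmul (card A) (c::'a::ab_group_add)"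
  by (simp add: sum.distrib sum_const_nsmul)

lemma nsmul_card: "nsmul (card (UNIV::'a::{ab_group_add,finite} set)) (z::'a) = 0"
proof -
  have "(\<Sum>x\<in>(UNIV::'a set). x + z) = (\<Sum>x\<in>UNIV. x)"
    by (rule sum.reindex_bij_witness[of _ "\<lambda>x. x - z" "\<lambda>x. x + z"]) auto
  then show ?thesis by (simp add: sum_add_const)
qed

lemma aut_diff: assumes "group_aut f" shows "f (x - y) = f x - f y"
proof -
  have "f (x - y) + f y = f x" using assms unfolding group_aut_def
    by (metis diff_add_cancel)
  then show ?thesis by (metis add_diff_cancel)
qed

lemma weight_formula:
  fixes S :: "'a::{ab_group_add,finite} set"
  assumes "group_aut f"
  shows "weight UNIV (cayley_adj S) f x = nsmul (card S) (f x) - (\<Sum>s\<in>S. f s)"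
proof -
  have N: "nbhd UNIV (cayley_adj S) x = (\<lambda>s. x - s) ` S"
    unfolding nbhd_def cayley_adj_def by force
  have inj: "inj_on (\<lambda>s. x - s) S" by (auto simp: inj_on_def)
  have "weight UNIV (cayley_adj S) f x = (\<Sum>s\<in>S. f (x - s))"
    unfolding weight_def N by (simp add: sum.reindex[OF inj])
  also have "\<dots> = (\<Sum>s\<in>S. f x - f s)" using aut_diff[OF assms] by simp
  also have "\<dots> = nsmul (card S) (f x) - (\<Sum>s\<in>S. f s)"
    by (simp add: sum_subtractf sum_const_nsmul)
  finally show ?thesis .
qed

lemma id_aut: "group_aut id" unfolding group_aut_def by auto

theorem mainTheorem2:
  fixes S :: "'a::{ab_group_add,finite} set"
  assumes "0 \<notin> S" and "uminus ` S = S"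
  defines "n \<equiv> card (UNIV :: 'a set)" and "r \<equiv> card S"
  shows "(coprime n r \<longrightarrow>
            (\<forall>f::'a \<Rightarrow> 'a. group_aut f \<longrightarrow> dist_antimagic_labelling UNIV (cayley_adj S) f)
            \<and> is_dist_antimagic TYPE('a) UNIV (cayley_adj S))
       \<and> (group_exp TYPE('a) dvd r \<longrightarrow>
            (\<forall>f::'a \<Rightarrow> 'a. group_aut f \<longrightarrow>
                dist_magic_labelling UNIV (cayley_adj S) f (\<Sum>s\<in>S. f s))
            \<and> is_dist_magic TYPE('a) UNIV (cayley_adj S))"
proof (intro conjI impI)
  have n0: "n \<noteq> 0" unfolding n_def by simp
  assume cop: "coprime n r"
  have kill: "z = 0" if "nsmul r z = 0" for z :: 'a
  proof -
    obtain a b where ab: "n * a = r * b + gcd n r" using bezout_nat[OF n0] by blast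
    hence "n * a = r * b + 1" using cop by simp
    hence "nsmul (n*a) z = nsmul (r*b) z + z" by (simp add: nsmul_add)
    moreover have "nsmul (n*a) z = 0"
      by (simp add: mult.commute[of n] nsmul_mult n_def nsmul_card nsmul_zero)
    moreover have "nsmul (r*b) z = 0"
      by (simp add: mult.commute[of r] nsmul_mult that nsmul_zero)
    ultimately show ?thesis by simp
  qed
  show A: "\<forall>f::'a \<Rightarrow> 'a. group_aut f \<longrightarrow> dist_antimagic_labelling UNIV (cayley_adj S) f"
  proof (intro allI impI)
    fix f :: "'a \<Rightarrow> 'a" assume f: "group_aut f"
    have "inj_on (weight UNIV (cayley_adj S) f) UNIV"
    proof (rule inj_onI)
      fix x y assume "weight UNIV (cayley_adj S) f x = weight UNIV (cayley_adj S) f y"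
      hence "nsmul r (f x) = nsmul r (f y)" by (simp add: weight_formula[OF f] r_def)
      hence "nsmul r (f x - f y) = 0" by (simp add: nsmul_diff)
      hence "f x = f y" using kill by fastforce
      thus "x = y" using f unfolding group_aut_def by (meson bij_def injD)
    qed
    thus "dist_antimagic_labelling UNIV (cayley_adj S) f"
      using f unfolding dist_antimagic_labelling_def group_aut_def by simp
  qed
  show "is_dist_antimagic TYPE('a) UNIV (cayley_adj S)"
    unfolding is_dist_antimagic_def using A id_aut by blast
next
  assume d: "group_exp TYPE('a) dvd r"
  have ex: "\<forall>x::'a. nsmul (group_exp TYPE('a)) x = 0"
  proof -
    have "0 < card (UNIV::'a set) \<and> (\<forall>x::'a. nsmul (card (UNIV::'a set)) x = 0)"
      using nsmul_card[where ?'a='a] finite_UNIV_card_ge_0[where ?'a='a] by simp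
    then show ?thesis unfolding group_exp_def by (rule LeastI2_ex[OF exI]) blast
  qed
  have rz: "nsmul r x = 0" for x :: 'a
  proof -
    obtain k where "r = group_exp TYPE('a) * k" using d by blast
    thus ?thesis by (simp add: mult.commute nsmul_mult ex nsmul_zero)
  qed
  have B: "\<forall>f::'a \<Rightarrow> 'a. group_aut f \<longrightarrow>
                dist_magic_labelling UNIV (cayley_adj S) f (\<Sum>s\<in>S. f s)"
  proof (intro allI impI)
    fix f :: "'a \<Rightarrow> 'a" assume f: "group_aut f"
    have "(\<Sum>s\<in>S. f s) = (\<Sum>s\<in>uminus ` S. f s)" using assms(2) by simp
    also have "\<dots> = (\<Sum>s\<in>S. f (- s))" by (simp add: sum.reindex inj_on_def)
    also have "\<dots> = (\<Sum>s\<in>S. - f s)" using aut_diff[OF f, of 0]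
      by (metis (no_types, lifting) aut_diff[OF f] diff_0 diff_self)
    also have "\<dots> = - (\<Sum>s\<in>S. f s)" by (simp add: sum_negf)
    finally have neg: "(\<Sum>s\<in>S. f s) = - (\<Sum>s\<in>S. f s)" .
    have "\<forall>x. weight UNIV (cayley_adj S) f x = (\<Sum>s\<in>S. f s)"
      using neg by (simp add: weight_formula[OF f] rz[unfolded r_def])
    thus "dist_magic_labelling UNIV (cayley_adj S) f (\<Sum>s\<in>S. f s)"
      using f unfolding dist_magic_labelling_def group_aut_def by simp
  qed
  show "\<forall>f::'a \<Rightarrow> 'a. group_aut f \<longrightarrow>
                dist_magic_labelling UNIV (cayley_adj S) f (\<Sum>s\<in>S. f s)" by (rule B)
  show "is_dist_magic TYPE('a) UNIV (cayley_adj S)"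
    unfolding is_dist_magic_def using B id_aut by blast
qed

end
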